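(* Let $p\ge 1$ and let $G=(V,E)$ be a $p$-regular graph with a Hamiltonian cycle $(v_0,v_1,\dots,v_{n-1},v_0)$, $n=|V|\ge 3$. Let $G^*$ be the graph with vertex set $\{v_0,\dots,v_{n-1}\}\cup\{v_0',\dots,v_{n-1}'\}$ (the $v_i'$ new vertices) and edge set $E\cup\{\{v_i',v_j'\}\mid \{v_i,v_j\}\in E\}\cup\{\{v_i,v'_{(i+1)\bmod n}\}\mid i\in\{0,\dots,n-1\}\}$. Then $G^*$ is $(p+1)$-regular, $(v_{n-1},v_0',v_{n-1}',v_{n-2}',\dots,v_1',v_0,v_1,\dots,v_{n-2},v_{n-1})$ is a Hamiltonian cycle of $G^*$, and $G^*$ is 3-colorable if and only if $G$ is 3-colorable.
   Context: A graph $G=(V,E)$ is 3-colorable if there is a function $f\colon V\to\{1,2,3\}$ with $f(v)\neq f(w)$ for every edge $\{v,w\}\in E$. A graph is $k$-regular if every vertex has degree exactly $k$. A Hamiltonian cycle visits every vertex exactly once; the tuple $(u_0,\dots,u_{m-1},u_0)$ denotes the cycle with edges $\{u_i,u_{i+1 \bmod m}\}$. *)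

theory Defs
  imports Main
begin

definition simple_graph :: "'a set \<Rightarrow> 'a set set \<Rightarrow> bool" where
  "simple_graph V E \<longleftrightarrow> finite V \<and>
     (\<forall>e\<in>E. \<exists>v w. e = {v, w} \<and> v \<noteq> w \<and> v \<in> V \<and> w \<in> V)"

definition degree :: "'a set set \<Rightarrow> 'a \<Rightarrow> nat" where
  "degree E v = card {e \<in> E. v \<in> e}"

definition regular :: "'a set \<Rightarrow> 'a set set \<Rightarrow> nat \<Rightarrow> bool" where
  "regular V E k \<longleftrightarrow> (\<forall>v\<in>V. degree E v = k)"

text \<open>The list [u0,...,u(m-1)] denotes the cycle (u0,...,u(m-1),u0) with edges
  {u i, u ((i+1) mod m)}; it is Hamiltonian if it visits every vertex exactly once.\<close>
definition ham_cycle :: "'a set \<Rightarrow> 'a set set \<Rightarrow> 'a list \<Rightarrow> bool" where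
  "ham_cycle V E us \<longleftrightarrow> distinct us \<and> set us = V \<and>
     (\<forall>i < length us. {us ! i, us ! ((i + 1) mod length us)} \<in> E)"

definition three_colorable :: "'a set \<Rightarrow> 'a set set \<Rightarrow> bool" where
  "three_colorable V E \<longleftrightarrow> (\<exists>f :: 'a \<Rightarrow> nat. (\<forall>v\<in>V. f v \<in> {1, 2, 3}) \<and>
     (\<forall>v w. {v, w} \<in> E \<longrightarrow> f v \<noteq> f w))"

text \<open>The construction G*: original vertices v_i are Inl (vs!i), new vertices v_i' are Inr (vs!i).\<close>
definition star_vertices :: "'a list \<Rightarrow> ('a + 'a) set" where
  "star_vertices vs = Inl ` set vs \<union> Inr ` set vs"

definition star_edges :: "'a set set \<Rightarrow> 'a list \<Rightarrow> ('a + 'a) set set" where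
  "star_edges E vs = (image Inl) ` E
     \<union> {{Inr (vs ! i), Inr (vs ! j)} | i j. i < length vs \<and> j < length vs \<and> {vs ! i, vs ! j} \<in> E}
     \<union> {{Inl (vs ! i), Inr (vs ! ((i + 1) mod length vs))} | i. i < length vs}"

definition star_cycle :: "'a list \<Rightarrow> ('a + 'a) list" where
  "star_cycle vs = [Inl (vs ! (length vs - 1)), Inr (vs ! 0)]
     @ map (\<lambda>j. Inr (vs ! j)) (rev [1..<length vs])
     @ map (\<lambda>j. Inl (vs ! j)) [0..<length vs - 1]"

end

theory Submission
  imports Defs
begin


lemma star_edges_alt:
  assumes "set vs = V" "\<forall>e\<in>E. \<exists>v w. e={v,w} \<and> v\<in>V \<and> w\<in>V"
  shows "star_edges E vs = image Inl ` E \<union> image Inr ` E \<union>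
     {{Inl (vs!i), Inr (vs!((i+1) mod length vs))} | i. i < length vs}"
proof -
  have eq: "{{Inr (vs ! i), Inr (vs ! j)} | i j. i < length vs \<and> j < length vs \<and> {vs ! i, vs ! j} \<in> E}
     = image Inr ` E" (is "?L = ?R")
  proof
    show "?L \<subseteq> ?R"
    proof
      fix x assume "x \<in> ?L"
      then obtain i j where "x = {Inr (vs ! i), Inr (vs ! j)}" "{vs ! i, vs ! j} \<in> E" by blast
      moreover have "{Inr (vs!i), Inr (vs!j)} = Inr ` {vs!i, vs!j}" by simp
      ultimately show "x \<in> ?R" by blast
    qed
    show "?R \<subseteq> ?L"
    proof
      fix x assume "x \<in> ?R"
      then obtain e where e: "e \<in> E" "x = Inr ` e" by auto
      then obtain v w where vw: "e = {v,w}" "v \<in> V" "w \<in> V" using assms(2) by blast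
      then obtain i j where "i < length vs" "j < length vs" "v = vs!i" "w = vs!j"
        using assms(1) by (metis in_set_conv_nth)
      then show "x \<in> ?L" using e vw by auto
    qed
  qed
  show ?thesis unfolding star_edges_def eq ..
qed

lemma star_cycle_nth:
  assumes "length vs = n" "n \<ge> 2" "k < 2*n"
  shows "star_cycle vs ! k = (if k = 0 then Inl (vs!(n-1)) else if k = 1 then Inr (vs!0)
     else if k \<le> n then Inr (vs!(n+1-k)) else Inl (vs!(k-n-1)))"
  using assms apply (auto simp: star_cycle_def nth_append rev_nth nth_Cons' )
  apply (rule arg_cong[of _ _ "(!) vs"]) by linarith

lemma star_cycle_len: "length vs \<ge> 1 \<Longrightarrow> length (star_cycle vs) = 2 * length vs"
  by (simp add: star_cycle_def)



lemma inj_img: "inj f \<Longrightarrow> inj_on (image f) F"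
  by (simp add: inj_image_eq_iff inj_on_def)

lemma mod_suc_inj: "(k::nat) < n \<Longrightarrow> i < n \<Longrightarrow> (k+1) mod n = (i+1) mod n \<Longrightarrow> k = i"
proof -
  assume a: "k < n" "i < n" "(k+1) mod n = (i+1) mod n"
  have h: "(x+1) mod n = (if x+1 = n then 0 else x+1)" if "x < n" for x
    using that by auto
  show "k = i" using a h[of k] h[of i] by (auto split: if_splits)
qed

lemma deg_Inl:
  assumes fin: "finite E" and d: "distinct vs" and i: "i < length vs"
  shows "degree (image Inl ` E \<union> image Inr ` E \<union>
     {{Inl (vs!i), Inr (vs!((i+1) mod length vs))} | i. i < length vs}) (Inl (vs!i)) = degree E (vs!i) + 1"
proof -
  let ?c = "{Inl (vs!i), Inr (vs!((i+1) mod length vs))}"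
  let ?F = "{e\<in>E. vs!i \<in> e}"
  have "{e \<in> image Inl ` E \<union> image Inr ` E \<union>
     {{Inl (vs!i), Inr (vs!((i+1) mod length vs))} | i. i < length vs}. Inl (vs!i) \<in> e}
    = insert ?c (image Inl ` ?F)" (is "?L = ?R")
  proof
    show "?L \<subseteq> ?R"
    proof
      fix e assume "e \<in> ?L"
      then consider (a) "e \<in> image Inl ` E" "Inl (vs!i) \<in> e" | (b) "e \<in> image Inr ` E" "Inl (vs!i) \<in> e"
        | (c) j where "j < length vs" "e = {Inl (vs!j), Inr (vs!((j+1) mod length vs))}" "Inl (vs!i) \<in> e"
        by blast
      then show "e \<in> ?R"
      proof cases
        case a then show ?thesis by auto
      next
        case b then show ?thesis by auto
      next
        case c
        then have "vs!j = vs!i" by auto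
        then have "j = i" using d i c(1) by (simp add: nth_eq_iff_index_eq)
        then show ?thesis using c by auto
      qed
    qed
    show "?R \<subseteq> ?L"
    proof
      fix e assume "e \<in> ?R"
      then consider "e = ?c" | "e \<in> image Inl ` ?F" by blast
      then show "e \<in> ?L"
      proof cases
        case 1
        have "?c \<in> {{Inl (vs!i), Inr (vs!((i+1) mod length vs))} | i. i < length vs}"
          using i by blast
        then show ?thesis using 1 by blast
      next
        case 2 then show ?thesis by blast
      qed
    qed
  qed
  moreover have "?c \<notin> image Inl ` ?F" by auto
  moreover have "finite ?F" using fin by simp
  moreover have "card (image Inl ` ?F) = card ?F" by (rule card_image, rule inj_img, simp)
  ultimately show ?thesis unfolding degree_def by simp
qed

lemma deg_Inr:
  assumes fin: "finite E" and d: "distinct vs" and j: "j < length vs"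
  shows "degree (image Inl ` E \<union> image Inr ` E \<union>
     {{Inl (vs!i), Inr (vs!((i+1) mod length vs))} | i. i < length vs}) (Inr (vs!j)) = degree E (vs!j) + 1"
proof -
  define n where "n = length vs"
  define i where "i = (if j = 0 then n - 1 else j - 1)"
  have i: "i < n" "(i+1) mod n = j" using j unfolding i_def n_def by auto
  let ?c = "{Inl (vs!i), Inr (vs!((i+1) mod length vs))}"
  let ?F = "{e\<in>E. vs!j \<in> e}"
  have "{e \<in> image Inl ` E \<union> image Inr ` E \<union>
     {{Inl (vs!i), Inr (vs!((i+1) mod length vs))} | i. i < length vs}. Inr (vs!j) \<in> e}
    = insert ?c (image Inr ` ?F)" (is "?L = ?R")
  proof
    show "?L \<subseteq> ?R"
    proof
      fix e assume "e \<in> ?L"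
      then consider (a) "e \<in> image Inl ` E" "Inr (vs!j) \<in> e" | (b) "e \<in> image Inr ` E" "Inr (vs!j) \<in> e"
        | (c) k where "k < length vs" "e = {Inl (vs!k), Inr (vs!((k+1) mod length vs))}" "Inr (vs!j) \<in> e"
        by blast
      then show "e \<in> ?R"
      proof cases
        case a then show ?thesis by auto
      next
        case b then show ?thesis by auto
      next
        case c
        then have "vs!((k+1) mod n) = vs!j" unfolding n_def by auto
        moreover have "0 < n" using j unfolding n_def by linarith
        then have "(k+1) mod n < n" by simp
        ultimately have "(k+1) mod n = j" using d j unfolding n_def by (simp add: nth_eq_iff_index_eq)
        then have "(k+1) mod n = (i+1) mod n" using i by simp
        then have "k = i" using c(1) i(1) mod_suc_inj unfolding n_def by blast
        then show ?thesis using c by auto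
      qed
    qed
    show "?R \<subseteq> ?L"
    proof
      fix e assume "e \<in> ?R"
      then consider "e = ?c" | "e \<in> image Inr ` ?F" by blast
      then show "e \<in> ?L"
      proof cases
        case 1
        have "?c \<in> {{Inl (vs!i), Inr (vs!((i+1) mod length vs))} | i. i < length vs}"
          using i(1) unfolding n_def by blast
        moreover have "Inr (vs!j) \<in> ?c" using i(2) unfolding n_def by simp
        ultimately show ?thesis using 1 by blast
      next
        case 2 then show ?thesis by blast
      qed
    qed
  qed
  moreover have "?c \<notin> image Inr ` ?F" by auto
  moreover have "finite ?F" using fin by simp
  moreover have "card (image Inr ` ?F) = card ?F" by (rule card_image, rule inj_img, simp)
  ultimately show ?thesis unfolding degree_def by simp
qed



lemma dist0: "distinct vs \<Longrightarrow> vs!0 = vs!x \<Longrightarrow> Suc 0 \<le> x \<Longrightarrow> x < length vs \<Longrightarrow> False"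
proof -
  assume a: "distinct vs" "vs!0 = vs!x" "Suc 0 \<le> x" "x < length vs"
  then have "0 < length vs" by linarith
  then show False using a nth_eq_iff_index_eq[of vs 0 x] by simp
qed

lemma ham_star:
  assumes d: "distinct vs" and n3: "length vs \<ge> 3"
    and ed: "\<forall>i < length vs. {vs ! i, vs ! ((i + 1) mod length vs)} \<in> E"
    and S: "S = image Inl ` E \<union> image Inr ` E \<union>
     {{Inl (vs!i), Inr (vs!((i+1) mod length vs))} | i. i < length vs}"
  shows "ham_cycle (star_vertices vs) S (star_cycle vs)"
proof -
  define n where "n = length vs"
  have n: "n \<ge> 3" using n3 n_def by simp
  have len: "length (star_cycle vs) = 2*n" using n by (simp add: star_cycle_len n_def)
  have dist: "distinct (star_cycle vs)"
    unfolding star_cycle_def using d n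
    apply (auto simp: distinct_map inj_on_def nth_eq_iff_index_eq n_def)
    using dist0 by fastforce
  have setc: "set (star_cycle vs) = star_vertices vs"
  proof -
    have s0: "set vs = (!) vs ` {0..<n}" by (auto simp: set_conv_nth n_def)
    have "{0..<n} = insert (n-1) {0..<n-1}" "{0..<n} = insert 0 {1..<n}" using n by auto
    then have s1: "set vs = (!) vs ` insert (n-1) {0..<n-1}" and s2: "set vs = (!) vs ` insert 0 {1..<n}"
      using s0 by simp_all
    have "Inl ` set vs = insert (Inl(vs!(n-1))) ((\<lambda>j. Inl(vs!j)) ` {0..<n-1})"
      by (simp only: s1 image_image image_insert)
    moreover have "Inr ` set vs = insert (Inr(vs!0)) ((\<lambda>j. Inr(vs!j)) ` {1..<n})"
      by (simp only: s2 image_image image_insert)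
    moreover have "set (star_cycle vs) = {Inl(vs!(n-1)), Inr(vs!0)} \<union> (\<lambda>j. Inr(vs!j)) ` {1..<n}
       \<union> (\<lambda>j. Inl(vs!j)) ` {0..<n-1}"
      unfolding star_cycle_def n_def by simp
    ultimately show ?thesis unfolding star_vertices_def by auto
  qed
  have EL: "{Inl(vs!i), Inl(vs!((i+1) mod n))} \<in> S" if "i<n" for i
  proof -
    have "{Inl(vs!i), Inl(vs!((i+1) mod n))} = Inl ` {vs!i, vs!((i+1) mod n)}" by simp
    then show ?thesis using ed that S n_def by blast
  qed
  have ER: "{Inr(vs!i), Inr(vs!((i+1) mod n))} \<in> S" if "i<n" for i
  proof -
    have "{Inr(vs!i), Inr(vs!((i+1) mod n))} = Inr ` {vs!i, vs!((i+1) mod n)}" by simp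
    then show ?thesis using ed that S n_def by blast
  qed
  have EC: "{Inl(vs!i), Inr(vs!((i+1) mod n))} \<in> S" if "i<n" for i
    using that S n_def by blast
  have edges: "{star_cycle vs ! k, star_cycle vs ! ((k+1) mod (2*n))} \<in> S" if k: "k < 2*n" for k
  proof -
    have nth: "star_cycle vs ! m = (if m = 0 then Inl (vs!(n-1)) else if m = 1 then Inr (vs!0)
     else if m \<le> n then Inr (vs!(n+1-m)) else Inl (vs!(m-n-1)))" if "m < 2*n" for m
      using star_cycle_nth[OF n_def[symmetric] _ that] n by simp
    consider "k = 0" | "k = 1" | "2 \<le> k" "k < n" | "k = n" | "n+1 \<le> k" "k < 2*n-1" | "k = 2*n-1"
      using k n by linarith
    then show ?thesis
    proof cases
      case 1
      then show ?thesis using EC[of "n-1"] n by (simp add: nth)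
    next
      case 2
      have "((n-1)+1) mod n = 0" using n by simp
      then have "{Inr(vs!(n-1)), Inr(vs!0)} \<in> S" using ER[of "n-1"] n by simp
      then show ?thesis using 2 n by (simp add: nth insert_commute)
    next
      case 3
      have "((n-k)+1) mod n = n+1-k" using 3 by simp
      then have "{Inr(vs!(n-k)), Inr(vs!(n+1-k))} \<in> S" using ER[of "n-k"] 3 by simp
      then show ?thesis using 3 n by (simp add: nth insert_commute)
    next
      case 4
      have "(0+1) mod n = 1" using n by simp
      then have "{Inl(vs!0), Inr(vs!1)} \<in> S" using EC[of 0] n by simp
      then show ?thesis using 4 n by (simp add: nth insert_commute)
    next
      case 5
      have "((k-n-1)+1) mod n = k-n" using 5 by simp
      then have "{Inl(vs!(k-n-1)), Inl(vs!(k-n))} \<in> S" using EL[of "k-n-1"] 5 by simp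
      moreover have "Suc k - n - 1 = k - n" using 5 by simp
      ultimately show ?thesis using 5 n by (simp add: nth)
    next
      case 6
      have "((n-2)+1) mod n = n-1" using n by simp
      then have "{Inl(vs!(n-2)), Inl(vs!(n-1))} \<in> S" using EL[of "n-2"] n by simp
      moreover have "(k+1) mod (2*n) = 0" using 6 n by simp
      moreover have "k - n - 1 = n - 2" using 6 n by simp
      moreover have "\<not> k \<le> n" "k \<noteq> 0" "k \<noteq> 1" using 6 n by auto
      ultimately show ?thesis using k by (simp add: nth)
    qed
  qed
  show ?thesis unfolding ham_cycle_def using dist setc edges len by simp
qed



lemma col_star:
  assumes sg: "simple_graph V E" and sv: "set vs = V"
    and ed: "\<forall>i < length vs. {vs ! i, vs ! ((i + 1) mod length vs)} \<in> E"
    and S: "S = image Inl ` E \<union> image Inr ` E \<union>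
     {{Inl (vs!i), Inr (vs!((i+1) mod length vs))} | i. i < length vs}"
  shows "three_colorable (star_vertices vs) S \<longleftrightarrow> three_colorable V E"
proof
  assume "three_colorable (star_vertices vs) S"
  then obtain f :: "_ \<Rightarrow> nat" where f1: "\<forall>v\<in>star_vertices vs. f v \<in> {1,2,3}"
    and f2: "\<forall>v w. {v, w} \<in> S \<longrightarrow> f v \<noteq> f w" unfolding three_colorable_def by blast
  show "three_colorable V E" unfolding three_colorable_def
  proof (intro exI[of _ "\<lambda>x. f (Inl x)"] conjI allI impI ballI)
    fix v assume "v \<in> V" then show "f (Inl v) \<in> {1,2,3}" using f1 sv unfolding star_vertices_def by blast
  next
    fix v w assume "{v,w} \<in> E"
    moreover have "{Inl v, Inl w} = Inl ` {v,w}" by simp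
    ultimately have "{Inl v, Inl w} \<in> S" using S by blast
    then show "f (Inl v) \<noteq> f (Inl w)" using f2 by blast
  qed
next
  assume "three_colorable V E"
  then obtain f :: "_ \<Rightarrow> nat" where f1: "\<forall>v\<in>V. f v \<in> {1,2,3}"
    and f2: "\<forall>v w. {v, w} \<in> E \<longrightarrow> f v \<noteq> f w" unfolding three_colorable_def by blast
  have f2': "f v \<noteq> f w" if "{v,w} \<in> E" for v w using f2 that by blast
  have f3: "f v \<noteq> f w" if "{a,b} = {v,w}" "{a,b} \<in> E" for a b v w
  proof -
    from that(1) have "(a = v \<and> b = w) \<or> (a = w \<and> b = v)" by (auto simp: doubleton_eq_iff)
    then show ?thesis using f2'[OF that(2)] by auto
  qed
  have ne: "v \<noteq> w" if "{v,w} \<in> E" for v w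
    using sg that unfolding simple_graph_def by (metis doubleton_eq_iff insert_absorb2)
  define g where "g = case_sum f f"
  show "three_colorable (star_vertices vs) S" unfolding three_colorable_def
  proof (intro exI[of _ g] conjI allI impI ballI)
    fix x assume "x \<in> star_vertices vs" then show "g x \<in> {1,2,3}"
      using f1 sv unfolding star_vertices_def g_def by auto
  next
    fix a b assume ab: "{a,b} \<in> S"
    then consider (l) e where "e \<in> E" "{a,b} = Inl ` e" | (r) e where "e \<in> E" "{a,b} = Inr ` e"
      | (c) i where "i < length vs" "{a,b} = {Inl (vs!i), Inr (vs!((i+1) mod length vs))}"
      using S by blast
    then show "g a \<noteq> g b"
    proof cases
      case l
      obtain v w where vw: "e = {v,w}" "v \<noteq> w" using sg l(1) unfolding simple_graph_def by blast
      then have "{a,b} = {Inl v, Inl w}" using l by simp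
      then have "(a = Inl v \<and> b = Inl w) \<or> (a = Inl w \<and> b = Inl v)" by (auto simp: doubleton_eq_iff)
      moreover have "{w,v} \<in> E" using l vw by (simp add: insert_commute)
      ultimately show ?thesis using f2' l vw unfolding g_def by auto
    next
      case r
      obtain v w where vw: "e = {v,w}" "v \<noteq> w" using sg r(1) unfolding simple_graph_def by blast
      then have "{a,b} = {Inr v, Inr w}" using r by simp
      then have "(a = Inr v \<and> b = Inr w) \<or> (a = Inr w \<and> b = Inr v)" by (auto simp: doubleton_eq_iff)
      moreover have "{w,v} \<in> E" using r vw by (simp add: insert_commute)
      ultimately show ?thesis using f2' r vw unfolding g_def by auto
    next
      case c
      let ?x = "vs!i" and ?y = "vs!((i+1) mod length vs)"
      have e: "{?x, ?y} \<in> E" "{?y, ?x} \<in> E" using ed c(1) by (auto simp: insert_commute)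
      have "(a = Inl ?x \<and> b = Inr ?y) \<or> (a = Inr ?y \<and> b = Inl ?x)" using c(2) by (auto simp: doubleton_eq_iff)
      then show ?thesis using f2'[OF e(1)] f2'[OF e(2)] unfolding g_def by auto
    qed
  qed
qed



theorem mainTheorem5:
  fixes V :: "'a set" and E :: "'a set set" and vs :: "'a list" and p :: nat
  assumes "p \<ge> 1"
    and "simple_graph V E"
    and "regular V E p"
    and "ham_cycle V E vs"
    and "card V \<ge> 3"
  shows "regular (star_vertices vs) (star_edges E vs) (p + 1)
       \<and> ham_cycle (star_vertices vs) (star_edges E vs) (star_cycle vs)
       \<and> (three_colorable (star_vertices vs) (star_edges E vs) \<longleftrightarrow> three_colorable V E)"
proof -
  have d: "distinct vs" and sv: "set vs = V"
    and ed: "\<forall>i < length vs. {vs ! i, vs ! ((i + 1) mod length vs)} \<in> E"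
    using assms(4) unfolding ham_cycle_def by auto
  have "card V = length vs" using distinct_card[OF d] sv by simp
  then have n3: "length vs \<ge> 3" using assms(5) by simp
  have sg: "finite V \<and> (\<forall>e\<in>E. \<exists>v w. e = {v, w} \<and> v \<noteq> w \<and> v \<in> V \<and> w \<in> V)"
    using assms(2) unfolding simple_graph_def .
  then have fV: "finite V" by (rule conjunct1)
  have eV: "\<forall>e\<in>E. \<exists>v w. e={v,w} \<and> v\<in>V \<and> w\<in>V"
  proof
    fix e assume "e \<in> E"
    then obtain v w where "e = {v, w}" "v \<in> V" "w \<in> V" using sg by blast
    then show "\<exists>v w. e={v,w} \<and> v\<in>V \<and> w\<in>V" by blast
  qed
  have "E \<subseteq> Pow V"
  proof
    fix e assume "e \<in> E"
    then obtain v w where "e = {v, w}" "v \<in> V" "w \<in> V" using eV by blast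
    then show "e \<in> Pow V" by simp
  qed
  moreover have "finite (Pow V)" using fV by simp
  ultimately have fE: "finite E" by (rule finite_subset)
  have S: "star_edges E vs = image Inl ` E \<union> image Inr ` E \<union>
     {{Inl (vs!i), Inr (vs!((i+1) mod length vs))} | i. i < length vs}"
    by (rule star_edges_alt[OF sv eV])
  have dIl: "degree (star_edges E vs) (Inl (vs!i)) = p + 1" if i: "i < length vs" for i
  proof -
    have "vs!i \<in> V" using sv i by (metis nth_mem)
    then have dp: "degree E (vs!i) = p" using assms(3) unfolding regular_def by simp
    show ?thesis unfolding S deg_Inl[OF fE d i] dp by (rule refl)
  qed
  have dIr: "degree (star_edges E vs) (Inr (vs!i)) = p + 1" if i: "i < length vs" for i
  proof -
    have "vs!i \<in> V" using sv i by (metis nth_mem)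
    then have dp: "degree E (vs!i) = p" using assms(3) unfolding regular_def by simp
    show ?thesis unfolding S deg_Inr[OF fE d i] dp by (rule refl)
  qed
  have reg: "regular (star_vertices vs) (star_edges E vs) (p + 1)"
    unfolding regular_def
  proof
    fix x assume "x \<in> star_vertices vs"
    then have "x \<in> Inl ` set vs \<or> x \<in> Inr ` set vs" unfolding star_vertices_def by (rule UnE) simp_all
    then show "degree (star_edges E vs) x = p + 1"
    proof
      assume "x \<in> Inl ` set vs"
      then obtain y where y: "y \<in> set vs" "x = Inl y" by (rule imageE) simp
      then obtain i where "i < length vs" "y = vs!i" by (metis in_set_conv_nth)
      then show ?thesis using dIl y(2) by simp
    next
      assume "x \<in> Inr ` set vs"
      then obtain y where y: "y \<in> set vs" "x = Inr y" by (rule imageE) simp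
      then obtain i where "i < length vs" "y = vs!i" by (metis in_set_conv_nth)
      then show ?thesis using dIr y(2) by simp
    qed
  qed
  show ?thesis by (intro conjI reg ham_star[OF d n3 ed S] col_star[OF assms(2) sv ed S])
qed


end
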